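(* Let $q$ be a prime power, let $n,k$ be integers with $3\le k\le n-2\le q-2$, and let $h=(k-1)+r$ with $1\le r\le k-2$. Let $\alpha_1,\dots,\alpha_n\in\mathbb{F}_q$ be pairwise distinct, let $G_{h,k}$ be the $k\times n$ matrix whose rows are $(\alpha_1^{e},\dots,\alpha_n^{e})$ for $e=0,1,\dots,k-2$ and $e=h$, let $\mathbf v=(v_1,\dots,v_n)\in(\mathbb{F}_q^* )^n$ and let $C_{h,\mathbf v}$ be the linear code generated by $G_{h,k}\cdot\mathrm{diag}(v_1,\dots,v_n)$. Let $u_i=\prod_{j\ne i}(\alpha_i-\alpha_j)^{-1}$ and $S_t=S_t(\alpha_1,\dots,\alpha_n)$. Then $C_{h,\mathbf v}$ is self-orthogonal if and only if there exists a polynomial $f(x)=\sum_{j=0}^{n-2k-r+1}f_jx^j\in\mathbb{F}_q[x]$ such that (1) $v_i^2=u_if(\alpha_i)$ for all $1\le i\le n$, and (2) $\sum_{j=s}^{s+r}f_jS_{j-s}=0$, where $s=n-2k-2r+1$ and $f_j=0$ for $j<0$.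
   Context: Convention: $0^0=1$. $S_t(x_1,\dots,x_m)=\sum_{t_1+\dots+t_m=t,\ t_i\ge0}x_1^{t_1}\cdots x_m^{t_m}$ is the complete homogeneous symmetric polynomial of degree $t$ ($S_0=1$). A linear code $C$ is self-orthogonal if $C\subseteq C^\perp$ (Euclidean dual). *)

theory Defs
  imports "HOL-Computational_Algebra.Polynomial"
begin

text \<open>Vectors of length n over a field are functions nat => 'a that vanish
  outside the index range 0..n-1 (coordinates 1..n of the paper are 0..n-1 here).\<close>

definition row_code :: "nat \<Rightarrow> nat \<Rightarrow> (nat \<Rightarrow> nat \<Rightarrow> 'a::field) \<Rightarrow> (nat \<Rightarrow> 'a) set" where
  "row_code m n G = {(\<lambda>i. if i < n then (\<Sum>j<m. c j * G j i) else 0) | c. True}"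

definition eucl_dual :: "nat \<Rightarrow> (nat \<Rightarrow> 'a::field) set \<Rightarrow> (nat \<Rightarrow> 'a) set" where
  "eucl_dual n C = {y. (\<forall>i\<ge>n. y i = 0) \<and> (\<forall>x\<in>C. (\<Sum>i<n. x i * y i) = 0)}"

definition self_orthogonal :: "nat \<Rightarrow> (nat \<Rightarrow> 'a::field) set \<Rightarrow> bool" where
  "self_orthogonal n C \<longleftrightarrow> C \<subseteq> eucl_dual n C"

definition Ghk_diag :: "nat \<Rightarrow> nat \<Rightarrow> (nat \<Rightarrow> 'a::field) \<Rightarrow> (nat \<Rightarrow> 'a) \<Rightarrow> nat \<Rightarrow> nat \<Rightarrow> 'a" where
  "Ghk_diag h k alpha v j i = (if j < k - 1 then alpha i ^ j else alpha i ^ h) * v i"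

text \<open>Complete homogeneous symmetric polynomial S_t(alpha_0,...,alpha_{n-1}), with 0^0 = 1.\<close>
definition complete_hom :: "nat \<Rightarrow> (nat \<Rightarrow> 'a::comm_ring_1) \<Rightarrow> nat \<Rightarrow> 'a" where
  "complete_hom n alpha t =
     (\<Sum>e\<in>{e::nat\<Rightarrow>nat. (\<forall>i\<ge>n. e i = 0) \<and> (\<Sum>i<n. e i) = t}. \<Prod>i<n. alpha i ^ e i)"

definition u_coef :: "nat \<Rightarrow> (nat \<Rightarrow> 'a::field) \<Rightarrow> nat \<Rightarrow> 'a" where
  "u_coef n alpha i = (\<Prod>j\<in>{..<n} - {i}. inverse (alpha i - alpha j))"

definition icoeff :: "'a::zero poly \<Rightarrow> int \<Rightarrow> 'a" where
  "icoeff f j = (if j < 0 then 0 else coeff f (nat j))"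

end

theory Submission
  imports Defs
begin


definition hset :: "nat \<Rightarrow> nat \<Rightarrow> (nat \<Rightarrow> nat) set" where
  "hset n t = {e::nat\<Rightarrow>nat. (\<forall>i\<ge>n. e i = 0) \<and> (\<Sum>i<n. e i) = t}"

lemma complete_hom_hset: "complete_hom n alpha t = (\<Sum>e\<in>hset n t. \<Prod>i<n. alpha i ^ e i)"
  unfolding complete_hom_def hset_def by simp

lemma finite_hset: "finite (hset n t)"
proof -
  have "hset n t \<subseteq> {f. \<forall>x. (x \<in> {..<n} \<longrightarrow> f x \<in> {..t}) \<and> (x \<notin> {..<n} \<longrightarrow> f x = 0)}"
  proof
    fix e assume e: "e \<in> hset n t"
    have "e x \<le> t" if x: "x < n" for x
    proof -
      have "e x \<le> (\<Sum>i<n. e i)" using x by (intro member_le_sum) auto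
      then show ?thesis using e by (auto simp: hset_def)
    qed
    then show "e \<in> {f. \<forall>x. (x \<in> {..<n} \<longrightarrow> f x \<in> {..t}) \<and> (x \<notin> {..<n} \<longrightarrow> f x = 0)}"
      using e by (auto simp: hset_def)
  qed
  then show ?thesis by (rule finite_subset) (intro finite_set_of_finite_funs, auto)
qed

lemma hset_0: "hset n 0 = {\<lambda>_. 0}"
  unfolding hset_def by (auto intro!: ext) (metis lessThan_iff not_le)

lemma hset_empty: "hset 0 (Suc t) = {}"
  unfolding hset_def by auto

lemma complete_hom_0: "complete_hom n alpha 0 = 1"
  by (simp add: complete_hom_hset hset_0)

lemma complete_hom_0n: "complete_hom 0 alpha (Suc t) = 0"
  by (simp add: complete_hom_hset hset_empty)

lemma complete_hom_rec:
  "complete_hom (Suc n) alpha (Suc t) = complete_hom n alpha (Suc t) + alpha n * complete_hom (Suc n) alpha t"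
proof -
  define A where "A = {e \<in> hset (Suc n) (Suc t). e n = 0}"
  define B where "B = {e \<in> hset (Suc n) (Suc t). e n \<noteq> 0}"
  define g where "g = (\<lambda>e::nat\<Rightarrow>nat. e(n := Suc (e n)))"
  have AB: "hset (Suc n) (Suc t) = A \<union> B" "A \<inter> B = {}" unfolding A_def B_def by auto
  have fA: "finite A" "finite B" unfolding A_def B_def using finite_hset by auto
  have A_eq: "A = hset n (Suc t)"
    unfolding A_def hset_def by (auto simp: le_Suc_eq) (metis Suc_leI le_neq_implies_less)
  have B_eq: "B = g ` hset (Suc n) t"
  proof safe
    fix e assume e: "e \<in> B"
    define e' where "e' = e(n := e n - 1)"
    have "e = g e'" using e unfolding g_def e'_def B_def by (auto intro!: ext)
    moreover have "e' \<in> hset (Suc n) t"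
    proof -
      have s: "(\<Sum>i<Suc n. e i) = Suc t" "\<forall>i\<ge>Suc n. e i = 0" "e n \<noteq> 0" using e by (auto simp: B_def hset_def)
      have "(\<Sum>i<Suc n. e' i) = (\<Sum>i<n. e i) + (e n - 1)"
        by (simp add: e'_def)
      also have "\<dots> = t" using s(1,3) by simp
      finally show ?thesis using s(2) unfolding hset_def e'_def by auto
    qed
    ultimately show "e \<in> g ` hset (Suc n) t" by blast
  next
    fix e assume e: "e \<in> hset (Suc n) t"
    have s: "(\<Sum>i<Suc n. e i) = t" "\<forall>i\<ge>Suc n. e i = 0" using e by (auto simp: hset_def)
    have "(\<Sum>i<Suc n. g e i) = (\<Sum>i<n. e i) + Suc (e n)" by (simp add: g_def)
    also have "\<dots> = Suc t" using s(1) by simp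
    finally show "g e \<in> B" using s(2) unfolding B_def hset_def g_def by auto
  qed
  have inj: "inj_on g (hset (Suc n) t)"
  proof (rule inj_onI)
    fix x y assume "g x = g y"
    then have "\<And>i. g x i = g y i" by simp
    then show "x = y" unfolding g_def by (metis Suc_inject fun_upd_apply ext)
  qed
  have "complete_hom (Suc n) alpha (Suc t) = (\<Sum>e\<in>A. \<Prod>i<Suc n. alpha i ^ e i) + (\<Sum>e\<in>B. \<Prod>i<Suc n. alpha i ^ e i)"
    unfolding complete_hom_hset AB(1) by (rule sum.union_disjoint) (use fA AB in auto)
  also have "(\<Sum>e\<in>A. \<Prod>i<Suc n. alpha i ^ e i) = complete_hom n alpha (Suc t)"
    unfolding complete_hom_hset A_eq by (rule sum.cong) (auto simp: hset_def)
  also have "(\<Sum>e\<in>B. \<Prod>i<Suc n. alpha i ^ e i) = (\<Sum>e\<in>hset (Suc n) t. \<Prod>i<Suc n. alpha i ^ g e i)"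
    unfolding B_eq by (rule sum.reindex[OF inj, unfolded comp_def])
  also have "\<dots> = (\<Sum>e\<in>hset (Suc n) t. alpha n * (\<Prod>i<Suc n. alpha i ^ e i))"
    by (rule sum.cong) (auto simp: g_def mult_ac)
  also have "\<dots> = alpha n * complete_hom (Suc n) alpha t"
    by (simp add: complete_hom_hset sum_distrib_left)
  finally show ?thesis .
qed



definition pp :: "nat \<Rightarrow> (nat \<Rightarrow> 'a::field) \<Rightarrow> nat \<Rightarrow> 'a poly" where
  "pp n alpha i = (\<Prod>j\<in>{..<n} - {i}. [:- alpha j, 1:])"

lemma degree_pp: assumes "i < n" shows "degree (pp n alpha i) \<le> n - 1"
proof -
  have "degree (pp n alpha i) \<le> (\<Sum>j\<in>{..<n} - {i}. degree [:- alpha j, 1:])"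
    unfolding pp_def using degree_prod_sum_le[of "{..<n} - {i}" "\<lambda>j. [:- alpha j, 1:]"] by (simp add: comp_def)
  also have "\<dots> = card ({..<n} - {i})" by simp
  also have "\<dots> \<le> n - 1" using assms by (simp add: card_Diff_singleton_if)
  finally show ?thesis .
qed

lemma coeff_pp: assumes "i < n" shows "coeff (pp n alpha i) (n - 1) = 1"
proof -
  have d: "degree (pp n alpha i) = n - 1"
  proof -
    have "degree (pp n alpha i) = (\<Sum>j\<in>{..<n} - {i}. degree [:- alpha j, 1:])"
      unfolding pp_def by (rule degree_prod_eq_sum_degree) auto
    also have "\<dots> = card ({..<n} - {i})" by simp
    also have "\<dots> = n - 1" using assms by simp
    finally show ?thesis .
  qed
  have "lead_coeff (pp n alpha i) = 1" unfolding pp_def lead_coeff_prod by simp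
  then show ?thesis using d by simp
qed

lemma poly_pp_other: "k < n \<Longrightarrow> k \<noteq> i \<Longrightarrow> poly (pp n alpha i) (alpha k) = 0"
  unfolding pp_def poly_prod by (rule prod_zero) auto

lemma poly_pp_self: assumes "inj_on alpha {..<n}" "i < n"
  shows "u_coef n alpha i * poly (pp n alpha i) (alpha i) = 1"
proof -
  have nz: "\<forall>j\<in>{..<n} - {i}. alpha i - alpha j \<noteq> 0"
    using assms by (auto dest: inj_onD)
  have "u_coef n alpha i * poly (pp n alpha i) (alpha i) =
      (\<Prod>j\<in>{..<n} - {i}. inverse (alpha i - alpha j) * (alpha i - alpha j))"
    unfolding u_coef_def pp_def poly_prod by (simp add: prod.distrib)
  also have "\<dots> = 1" using nz by (intro prod.neutral) auto
  finally show ?thesis .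
qed

lemma LAG:
  fixes p :: "'a::field poly"
  assumes n: "1 \<le> n" and inj: "inj_on alpha {..<n}" and dp: "degree p < n"
  shows "coeff p (n - 1) = (\<Sum>i<n. u_coef n alpha i * poly p (alpha i))"
proof -
  define L where "L = (\<Sum>i<n. smult (u_coef n alpha i * poly p (alpha i)) (pp n alpha i))"
  define q where "q = p - L"
  have dL: "degree L \<le> n - 1" unfolding L_def
  proof (intro degree_sum_le)
    fix i assume "i \<in> {..<n}"
    then have "degree (pp n alpha i) \<le> n - 1" by (intro degree_pp) auto
    then show "degree (smult (u_coef n alpha i * poly p (alpha i)) (pp n alpha i)) \<le> n - 1"
      using degree_smult_le order.trans by blast
  qed simp
  have dq: "degree q \<le> n - 1" unfolding q_def using dL dp by (intro degree_diff_le) auto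
  have root: "poly q (alpha k) = 0" if k: "k < n" for k
  proof -
    have "poly L (alpha k) = (\<Sum>i<n. u_coef n alpha i * poly p (alpha i) * poly (pp n alpha i) (alpha k))"
      unfolding L_def poly_sum by simp
    also have "\<dots> = u_coef n alpha k * poly p (alpha k) * poly (pp n alpha k) (alpha k) +
        (\<Sum>i\<in>{..<n} - {k}. u_coef n alpha i * poly p (alpha i) * poly (pp n alpha i) (alpha k))"
      by (rule sum.remove) (use k in auto)
    also have "(\<Sum>i\<in>{..<n} - {k}. u_coef n alpha i * poly p (alpha i) * poly (pp n alpha i) (alpha k)) = 0"
      by (rule sum.neutral) (use k in \<open>auto simp: poly_pp_other\<close>)
    also have "u_coef n alpha k * poly p (alpha k) * poly (pp n alpha k) (alpha k) + 0 = poly p (alpha k)"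
      using poly_pp_self[OF inj k] by (simp add: mult_ac)
    finally show ?thesis unfolding q_def by simp
  qed
  have "q = 0"
  proof (rule ccontr)
    assume q0: "q \<noteq> 0"
    have "alpha ` {..<n} \<subseteq> {x. poly q x = 0}" using root by auto
    then have "card (alpha ` {..<n}) \<le> card {x. poly q x = 0}"
      by (intro card_mono poly_roots_finite q0)
    also have "\<dots> \<le> degree q" by (rule card_poly_roots_bound[OF q0])
    finally have "n \<le> n - 1" using dq card_image[OF inj] by simp
    then show False using n by simp
  qed
  then have "p = L" unfolding q_def by simp
  then have "coeff p (n - 1) = coeff L (n - 1)" by simp
  also have "\<dots> = (\<Sum>i<n. u_coef n alpha i * poly p (alpha i) * coeff (pp n alpha i) (n - 1))"
    unfolding L_def coeff_sum by simp
  also have "\<dots> = (\<Sum>i<n. u_coef n alpha i * poly p (alpha i))"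
    by (intro sum.cong refl) (metis coeff_pp lessThan_iff mult.right_neutral)
  finally show ?thesis .
qed

definition Dsum :: "nat \<Rightarrow> (nat \<Rightarrow> 'a::field) \<Rightarrow> nat \<Rightarrow> 'a" where
  "Dsum n alpha m = (\<Sum>i<n. u_coef n alpha i * alpha i ^ m)"

lemma u_step: assumes inj: "inj_on alpha {..<Suc n}" and i: "i < n"
  shows "u_coef (Suc n) alpha i * (alpha i - alpha n) = u_coef n alpha i"
proof -
  have ne: "alpha i - alpha n \<noteq> 0" using inj i by (auto dest: inj_onD)
  have "{..<Suc n} - {i} = insert n ({..<n} - {i})" using i by auto
  then have "u_coef (Suc n) alpha i = inverse (alpha i - alpha n) * u_coef n alpha i"
    unfolding u_coef_def by simp
  then show ?thesis using ne by simp
qed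

lemma D_rec: assumes inj: "inj_on alpha {..<Suc n}"
  shows "Dsum (Suc n) alpha (Suc m) = Dsum n alpha m + alpha n * Dsum (Suc n) alpha m"
proof -
  have "Dsum (Suc n) alpha (Suc m) - alpha n * Dsum (Suc n) alpha m =
      (\<Sum>i<Suc n. u_coef (Suc n) alpha i * (alpha i - alpha n) * alpha i ^ m)"
    unfolding Dsum_def sum_distrib_left sum_subtractf[symmetric]
    by (rule sum.cong) (auto simp: algebra_simps)
  also have "\<dots> = (\<Sum>i<n. u_coef (Suc n) alpha i * (alpha i - alpha n) * alpha i ^ m)"
    by simp
  also have "\<dots> = Dsum n alpha m" unfolding Dsum_def
    by (rule sum.cong) (auto simp: u_step[OF inj])
  finally show ?thesis by (simp add: algebra_simps)
qed

lemma D_eq: assumes "inj_on alpha {..<n}"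
  shows "Dsum n alpha m = (if n \<le> m + 1 then complete_hom n alpha (m + 1 - n) else 0)"
  using assms
proof (induction n arbitrary: m)
  case 0
  then show ?case by (simp add: Dsum_def complete_hom_0n)
next
  case (Suc n)
  note outerIH = Suc.IH
  have injS: "inj_on alpha {..<Suc n}" by (rule Suc.prems)
  have injn: "inj_on alpha {..<n}" using Suc.prems by (rule inj_on_subset) auto
  show ?case
  proof (induction m)
    case 0
    have "coeff (1::'a poly) (Suc n - 1) = (\<Sum>i<Suc n. u_coef (Suc n) alpha i * poly 1 (alpha i))"
      by (rule LAG[OF _ injS]) auto
    then show ?case by (auto simp: Dsum_def complete_hom_0)
  next
    case (Suc m)
    have "Dsum (Suc n) alpha (Suc m) = Dsum n alpha m + alpha n * Dsum (Suc n) alpha m"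
      by (rule D_rec[OF injS])
    then have eq: "Dsum (Suc n) alpha (Suc m) = (if n \<le> m + 1 then complete_hom n alpha (m + 1 - n) else 0) +
        alpha n * (if Suc n \<le> m + 1 then complete_hom (Suc n) alpha (m + 1 - Suc n) else 0)"
      using outerIH[OF injn, of m] Suc.IH by simp
    show ?case
    proof -
      consider "n \<le> m" | "n = Suc m" | "n > Suc m" by linarith
      then show ?thesis
      proof cases
        case 1
        then have "Suc m + 1 - Suc n = Suc (m - n)" "m + 1 - n = Suc (m - n)" "m + 1 - Suc n = m - n" by auto
        then show ?thesis using eq 1 complete_hom_rec[of n alpha "m - n"] by simp
      next
        case 2 then show ?thesis using eq by (simp add: complete_hom_0)
      next
        case 3 then show ?thesis using eq by simp
      qed
    qed
  qed
qed



lemma row_code_mem: "x \<in> row_code m n G \<longleftrightarrow> (\<exists>c. x = (\<lambda>i. if i < n then (\<Sum>j<m. c j * G j i) else 0))"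
  unfolding row_code_def by auto

lemma SO_iff:
  fixes G :: "nat \<Rightarrow> nat \<Rightarrow> 'a::field"
  shows "self_orthogonal n (row_code m n G) \<longleftrightarrow> (\<forall>j<m. \<forall>l<m. (\<Sum>i<n. G j i * G l i) = 0)"
proof
  assume so: "self_orthogonal n (row_code m n G)"
  show "\<forall>j<m. \<forall>l<m. (\<Sum>i<n. G j i * G l i) = 0"
  proof (intro allI impI)
    fix j l assume j: "j < m" and l: "l < m"
    define x where "x = (\<lambda>i. if i < n then (\<Sum>j'<m. (if j' = j then 1 else 0) * G j' i) else 0)"
    define y where "y = (\<lambda>i. if i < n then (\<Sum>j'<m. (if j' = l then 1 else 0) * G j' i) else 0)"
    have xm1: "x \<in> row_code m n G" unfolding row_code_mem x_def by (rule exI[of _ "\<lambda>j'. if j' = j then 1 else 0"]) (rule refl)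
    have xm2: "y \<in> row_code m n G" unfolding row_code_mem y_def by (rule exI[of _ "\<lambda>j'. if j' = l then 1 else 0"]) (rule refl)
    note xm = xm1 xm2
    have "y \<in> eucl_dual n (row_code m n G)" using so xm unfolding self_orthogonal_def by auto
    then have "(\<Sum>i<n. x i * y i) = 0" using xm unfolding eucl_dual_def by auto
    moreover have "x i = G j i" "y i = G l i" if "i < n" for i
    proof -
      have "(\<Sum>j'<m. (if j' = a then 1 else 0) * G j' i) = G a i" if "a < m" for a
      proof -
        have "(\<Sum>j'<m. (if j' = a then 1 else 0) * G j' i) = (\<Sum>j'<m. if j' = a then G j' i else 0)"
          by (rule sum.cong) auto
        then show ?thesis using that by simp
      qed
      then show "x i = G j i" "y i = G l i" using \<open>i < n\<close> j l unfolding x_def y_def by auto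
    qed
    ultimately show "(\<Sum>i<n. G j i * G l i) = 0" by simp
  qed
next
  assume H: "\<forall>j<m. \<forall>l<m. (\<Sum>i<n. G j i * G l i) = 0"
  show "self_orthogonal n (row_code m n G)"
    unfolding self_orthogonal_def
  proof
    fix y assume y: "y \<in> row_code m n G"
    then obtain d where d: "y = (\<lambda>i. if i < n then (\<Sum>l<m. d l * G l i) else 0)" unfolding row_code_mem by blast
    have "(\<Sum>i<n. x i * y i) = 0" if x: "x \<in> row_code m n G" for x
    proof -
      obtain c where c: "x = (\<lambda>i. if i < n then (\<Sum>j<m. c j * G j i) else 0)" using x unfolding row_code_mem by blast
      have "(\<Sum>i<n. x i * y i) = (\<Sum>i<n. (\<Sum>j<m. c j * G j i) * (\<Sum>l<m. d l * G l i))"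
        by (simp add: c d)
      also have "\<dots> = (\<Sum>i<n. \<Sum>j<m. \<Sum>l<m. c j * d l * (G j i * G l i))"
        by (simp add: sum_product mult_ac)
      also have "\<dots> = (\<Sum>j<m. \<Sum>l<m. c j * d l * (\<Sum>i<n. G j i * G l i))"
        by (simp add: sum_distrib_left sum.swap[of _ "{..<n}"])
      also have "\<dots> = 0" using H by simp
      finally show ?thesis .
    qed
    then show "y \<in> eucl_dual n (row_code m n G)" unfolding eucl_dual_def using d by auto
  qed
qed

lemma exist_f:
  fixes alpha w :: "nat \<Rightarrow> 'a::field"
  assumes inj: "inj_on alpha {..<n}"
    and A: "\<forall>m\<le>M. (\<Sum>i<n. w i * alpha i ^ m) = 0"
  shows "\<exists>f::'a poly. (\<forall>j. int j > int n - int M - 2 \<longrightarrow> coeff f j = 0) \<and>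
     (\<forall>i<n. w i = u_coef n alpha i * poly f (alpha i))"
proof -
  define g where "g = (\<Sum>i<n. smult (w i) (pp n alpha i))"
  have val: "w k = u_coef n alpha k * poly g (alpha k)" if k: "k < n" for k
  proof -
    have "poly g (alpha k) = (\<Sum>i<n. w i * poly (pp n alpha i) (alpha k))"
      unfolding g_def poly_sum by simp
    also have "\<dots> = w k * poly (pp n alpha k) (alpha k) +
        (\<Sum>i\<in>{..<n} - {k}. w i * poly (pp n alpha i) (alpha k))"
      by (rule sum.remove) (use k in auto)
    also have "(\<Sum>i\<in>{..<n} - {k}. w i * poly (pp n alpha i) (alpha k)) = 0"
      by (rule sum.neutral) (use k in \<open>auto simp: poly_pp_other\<close>)
    finally have "u_coef n alpha k * poly g (alpha k) = w k * (u_coef n alpha k * poly (pp n alpha k) (alpha k))"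
      by (simp add: mult_ac)
    then show ?thesis using poly_pp_self[OF inj k] by simp
  qed
  have dg: "degree g \<le> n - 1" unfolding g_def
  proof (intro degree_sum_le)
    fix i assume "i \<in> {..<n}"
    then have "degree (pp n alpha i) \<le> n - 1" by (intro degree_pp) auto
    then show "degree (smult (w i) (pp n alpha i)) \<le> n - 1"
      using degree_smult_le order.trans by blast
  qed simp
  have bound: "\<forall>j. int j > int n - int M - 2 \<longrightarrow> coeff g j = 0"
  proof (rule ccontr)
    assume "\<not> ?thesis"
    then obtain j where j: "int j > int n - int M - 2" "coeff g j \<noteq> 0" by auto
    define d where "d = degree g"
    have g0: "g \<noteq> 0" using j by auto
    have jd: "j \<le> d" unfolding d_def using j(2) le_degree by blast
    have cd: "coeff g d \<noteq> 0" unfolding d_def using g0 by simp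
    have n1: "1 \<le> n"
    proof (rule ccontr)
      assume "\<not> 1 \<le> n" then have "n = 0" by simp
      then show False using g0 unfolding g_def by simp
    qed
    have dn: "d \<le> n - 1" using dg d_def by simp
    define e where "e = n - 1 - d"
    have eM: "e \<le> M" using j(1) jd dn n1 unfolding e_def by linarith
    define p where "p = monom 1 e * g"
    have dp: "degree p < n"
    proof -
      have "degree p \<le> degree (monom (1::'a) e) + degree g" unfolding p_def by (rule degree_mult_le)
      also have "\<dots> \<le> e + d" by (simp add: d_def degree_monom_le)
      finally show ?thesis using dn n1 unfolding e_def by linarith
    qed
    have "coeff p (n - 1) = (\<Sum>i<n. u_coef n alpha i * poly p (alpha i))"
      by (rule LAG[OF n1 inj dp])
    also have "\<dots> = (\<Sum>i<n. w i * alpha i ^ e)"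
      by (rule sum.cong) (auto simp: p_def poly_monom val mult_ac)
    also have "\<dots> = 0" using A eM by simp
    finally have "coeff p (n - 1) = 0" .
    moreover have "coeff p (n - 1) = coeff g d"
    proof -
      have "n - 1 - e = d" using dn unfolding e_def by simp
      then show ?thesis unfolding p_def coeff_monom_mult using dn unfolding e_def by simp
    qed
    ultimately show False using cd by simp
  qed
  show ?thesis using bound val by blast
qed



lemma Aexp: "(\<Sum>i<n. Ghk_diag h k alpha v j i * Ghk_diag h k alpha v l i) =
   (\<Sum>i<n. v i ^ 2 * alpha i ^ ((if j < k - 1 then j else h) + (if l < k - 1 then l else h)))"
  unfolding Ghk_diag_def by (rule sum.cong) (auto simp: power_add power2_eq_square mult_ac)

lemma K_expand:
  fixes alpha w :: "nat \<Rightarrow> 'a::field"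
  assumes "\<forall>i<n. w i = u_coef n alpha i * poly f (alpha i)"
  shows "(\<Sum>i<n. w i * alpha i ^ m) = (\<Sum>j\<le>degree f. coeff f j * Dsum n alpha (j + m))"
proof -
  have "(\<Sum>i<n. w i * alpha i ^ m) = (\<Sum>i<n. \<Sum>j\<le>degree f. coeff f j * (u_coef n alpha i * alpha i ^ (j + m)))"
    using assms by (intro sum.cong refl) (simp add: poly_altdef sum_distrib_left sum_distrib_right power_add mult_ac)
  also have "\<dots> = (\<Sum>j\<le>degree f. coeff f j * Dsum n alpha (j + m))"
    unfolding Dsum_def by (subst sum.swap) (simp add: sum_distrib_left)
  finally show ?thesis .
qed



lemma K1:
  fixes alpha w :: "nat \<Rightarrow> 'a::field"
  assumes inj: "inj_on alpha {..<n}"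
    and rep: "\<forall>i<n. w i = u_coef n alpha i * poly f (alpha i)"
    and bd: "\<forall>j. int j > int n - int M - 2 \<longrightarrow> coeff f j = 0"
    and m: "m \<le> M"
  shows "(\<Sum>i<n. w i * alpha i ^ m) = 0"
proof -
  have "(\<Sum>i<n. w i * alpha i ^ m) = (\<Sum>j\<le>degree f. coeff f j * Dsum n alpha (j + m))"
    by (rule K_expand[OF rep])
  also have "\<dots> = 0"
  proof (rule sum.neutral, rule ballI)
    fix j assume "j \<in> {..degree f}"
    show "coeff f j * Dsum n alpha (j + m) = 0"
    proof (cases "int j > int n - int M - 2")
      case True then show ?thesis using bd by simp
    next
      case False
      then have "\<not> n \<le> j + m + 1" using m by linarith
      then show ?thesis by (simp add: D_eq[OF inj])
    qed
  qed
  finally show ?thesis .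
qed

lemma K2:
  fixes alpha w :: "nat \<Rightarrow> 'a::field"
  assumes inj: "inj_on alpha {..<n}"
    and rep: "\<forall>i<n. w i = u_coef n alpha i * poly f (alpha i)"
    and bd: "\<forall>j. int j > s + int r \<longrightarrow> coeff f j = 0"
    and s: "s = int n - 2 * int h - 1"
  shows "(\<Sum>i<n. w i * alpha i ^ (2 * h)) =
     (\<Sum>j\<in>{s..s + int r}. icoeff f j * complete_hom n alpha (nat (j - s)))"
proof -
  define F where "F = (\<lambda>j. coeff f j * complete_hom n alpha (nat (int j - s)))"
  define T where "T = {j::nat. s \<le> int j \<and> int j \<le> s + int r}"
  define V where "V = {j. j \<le> degree f \<and> s \<le> int j}"
  have fT: "finite T" unfolding T_def by (rule finite_subset[of _ "{..nat (s + int r)}"]) auto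
  have bd': "int j \<le> s + int r" if "coeff f j \<noteq> 0" for j using bd that by force
  have fV: "finite V" unfolding V_def by simp
  have "(\<Sum>i<n. w i * alpha i ^ (2 * h)) = (\<Sum>j\<le>degree f. coeff f j * Dsum n alpha (j + 2 * h))"
    by (rule K_expand[OF rep])
  also have "\<dots> = (\<Sum>j\<le>degree f. if s \<le> int j then F j else 0)"
  proof (rule sum.cong[OF refl])
    fix j
    show "coeff f j * Dsum n alpha (j + 2 * h) = (if s \<le> int j then F j else 0)"
    proof (cases "s \<le> int j")
      case True
      then have "n \<le> j + 2 * h + 1" "nat (int j - s) = j + 2 * h + 1 - n" using s by linarith+
      then show ?thesis using True by (simp add: D_eq[OF inj] F_def)
    next
      case False
      then have "\<not> n \<le> j + 2 * h + 1" using s by linarith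
      then show ?thesis using False by (simp add: D_eq[OF inj])
    qed
  qed
  also have "\<dots> = sum F V" unfolding V_def
    by (simp add: sum.inter_filter[symmetric] Int_def atMost_def conj_commute)
  also have "\<dots> = sum F T"
  proof -
    have 1: "sum F (V \<union> T) = sum F V"
      by (rule sum.mono_neutral_right) (use fT fV in \<open>auto simp: V_def T_def F_def intro: le_degree\<close>)
    have 2: "sum F (V \<union> T) = sum F T"
      by (rule sum.mono_neutral_right) (use fT fV bd' in \<open>auto simp: V_def T_def F_def\<close>)
    show ?thesis using 1 2 by simp
  qed
  also have "\<dots> = (\<Sum>j\<in>int ` T. icoeff f j * complete_hom n alpha (nat (j - s)))"
    by (subst sum.reindex) (auto simp: F_def icoeff_def)
  also have "int ` T = {s..s + int r} \<inter> {0..}"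
  proof
    show "int ` T \<subseteq> {s..s + int r} \<inter> {0..}" by (auto simp: T_def)
    show "{s..s + int r} \<inter> {0..} \<subseteq> int ` T"
    proof
      fix x assume "x \<in> {s..s + int r} \<inter> {0..}"
      then show "x \<in> int ` T" unfolding T_def by (intro image_eqI[of _ _ "nat x"]) auto
    qed
  qed
  also have "(\<Sum>j\<in>{s..s + int r} \<inter> {0..}. icoeff f j * complete_hom n alpha (nat (j - s))) =
      (\<Sum>j\<in>{s..s + int r}. icoeff f j * complete_hom n alpha (nat (j - s)))"
    by (rule sum.mono_neutral_left) (auto simp: icoeff_def)
  finally show ?thesis .
qed



lemma exps:
  fixes A :: "nat \<Rightarrow> 'a::field"
  assumes k: "3 \<le> k" and r: "1 \<le> r" "r + 2 \<le> k" and h: "h = (k - 1) + r"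
  shows "(\<forall>j<k. \<forall>l<k. A ((if j < k - 1 then j else h) + (if l < k - 1 then l else h)) = 0) \<longleftrightarrow>
    ((\<forall>m\<le>2 * k - 3 + r. A m = 0) \<and> A (2 * h) = 0)"
proof
  assume P: "\<forall>j<k. \<forall>l<k. A ((if j < k - 1 then j else h) + (if l < k - 1 then l else h)) = 0"
  have m: "A m = 0" if m: "m \<le> 2 * k - 3 + r" for m
  proof (cases "h \<le> m")
    case True
    have lt: "m - h < k - 1" using m h k r True by arith
    have "A ((if k - 1 < k - 1 then k - 1 else h) + (if m - h < k - 1 then m - h else h)) = 0"
      using lt k by (intro P[rule_format]) auto
    then have "A (h + (m - h)) = 0" using lt by simp
    then show ?thesis using True by simp
  next
    case False
    define j where "j = min m (k - 2)"
    have jj: "j < k - 1" "m - j < k - 1" using k h False r unfolding j_def by auto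
    have "A ((if j < k - 1 then j else h) + (if m - j < k - 1 then m - j else h)) = 0"
      using jj by (intro P[rule_format]) auto
    moreover note jj
    ultimately show ?thesis unfolding j_def by simp
  qed
  moreover have "A (2 * h) = 0" using P[rule_format, of "k - 1" "k - 1"] k by (simp add: mult_2)
  ultimately show "(\<forall>m\<le>2 * k - 3 + r. A m = 0) \<and> A (2 * h) = 0" by blast
next
  assume Q: "(\<forall>m\<le>2 * k - 3 + r. A m = 0) \<and> A (2 * h) = 0"
  show "\<forall>j<k. \<forall>l<k. A ((if j < k - 1 then j else h) + (if l < k - 1 then l else h)) = 0"
  proof (intro allI impI)
    fix j l assume j: "j < k" and l: "l < k"
    show "A ((if j < k - 1 then j else h) + (if l < k - 1 then l else h)) = 0"
    proof (cases "j < k - 1 \<or> l < k - 1")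
      case True
      then have "(if j < k - 1 then j else h) + (if l < k - 1 then l else h) \<le> 2 * k - 3 + r"
        using j l h k r by auto
      then show ?thesis using Q by blast
    next
      case False then show ?thesis using Q by (simp add: mult_2)
    qed
  qed
qed



theorem theorem4p11:
  fixes alpha v :: "nat \<Rightarrow> 'a::{finite,field}"
    and n k h r :: nat
  assumes "3 \<le> k" and "k + 2 \<le> n" and "n \<le> card (UNIV :: 'a set)"
    and "1 \<le> r" and "r + 2 \<le> k" and "h = (k - 1) + r"
    and "inj_on alpha {..<n}"
    and "\<forall>i<n. v i \<noteq> 0"
  shows "self_orthogonal n (row_code k n (Ghk_diag h k alpha v)) \<longleftrightarrow>
    (\<exists>f :: 'a poly.
       (\<forall>j. int j > int n - 2 * int k - int r + 1 \<longrightarrow> coeff f j = 0) \<and>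
       (\<forall>i<n. v i ^ 2 = u_coef n alpha i * poly f (alpha i)) \<and>
       (let s = int n - 2 * int k - 2 * int r + 1 in
          (\<Sum>j\<in>{s..s + int r}. icoeff f j * complete_hom n alpha (nat (j - s))) = 0))"
proof -
  note inj = assms(7)
  define M where "M = 2 * k - 3 + r"
  define s where "s = int n - 2 * int k - 2 * int r + 1"
  have SO: "self_orthogonal n (row_code k n (Ghk_diag h k alpha v)) \<longleftrightarrow>
      (\<forall>m\<le>M. (\<Sum>i<n. v i ^ 2 * alpha i ^ m) = 0) \<and> (\<Sum>i<n. v i ^ 2 * alpha i ^ (2 * h)) = 0"
    unfolding SO_iff Aexp M_def
    by (rule exps[where A = "\<lambda>m. \<Sum>i<n. v i ^ 2 * alpha i ^ m", OF assms(1,4,5,6)])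
  have s': "s = int n - 2 * int h - 1" using assms(1,6) unfolding s_def by simp
  have bdM: "int n - int M - 2 = int n - 2 * int k - int r + 1" using assms(1) unfolding M_def by simp
  have bds: "s + int r = int n - 2 * int k - int r + 1" unfolding s_def by simp
  show ?thesis unfolding SO Let_def s_def[symmetric]
  proof
    assume L: "(\<forall>m\<le>M. (\<Sum>i<n. v i ^ 2 * alpha i ^ m) = 0) \<and> (\<Sum>i<n. v i ^ 2 * alpha i ^ (2 * h)) = 0"
    obtain f :: "'a poly" where fb: "\<forall>j. int j > int n - int M - 2 \<longrightarrow> coeff f j = 0"
      and rep: "\<forall>i<n. v i ^ 2 = u_coef n alpha i * poly f (alpha i)"
      using exist_f[OF inj, of M "\<lambda>i. v i ^ 2"] L by blast
    have "(\<Sum>i<n. v i ^ 2 * alpha i ^ (2 * h)) =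
        (\<Sum>j\<in>{s..s + int r}. icoeff f j * complete_hom n alpha (nat (j - s)))"
      by (rule K2[OF inj rep _ s']) (use fb bdM bds in simp)
    then show "\<exists>f :: 'a poly.
       (\<forall>j. int j > int n - 2 * int k - int r + 1 \<longrightarrow> coeff f j = 0) \<and>
       (\<forall>i<n. v i ^ 2 = u_coef n alpha i * poly f (alpha i)) \<and>
       (\<Sum>j\<in>{s..s + int r}. icoeff f j * complete_hom n alpha (nat (j - s))) = 0"
      using fb bdM rep L by (intro exI[of _ f]) auto
  next
    assume "\<exists>f :: 'a poly.
       (\<forall>j. int j > int n - 2 * int k - int r + 1 \<longrightarrow> coeff f j = 0) \<and>
       (\<forall>i<n. v i ^ 2 = u_coef n alpha i * poly f (alpha i)) \<and>
       (\<Sum>j\<in>{s..s + int r}. icoeff f j * complete_hom n alpha (nat (j - s))) = 0"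
    then obtain f :: "'a poly" where fb: "\<forall>j. int j > int n - 2 * int k - int r + 1 \<longrightarrow> coeff f j = 0"
      and rep: "\<forall>i<n. v i ^ 2 = u_coef n alpha i * poly f (alpha i)"
      and sc: "(\<Sum>j\<in>{s..s + int r}. icoeff f j * complete_hom n alpha (nat (j - s))) = 0"
      by blast
    have "(\<Sum>i<n. v i ^ 2 * alpha i ^ m) = 0" if "m \<le> M" for m
      by (rule K1[OF inj rep _ that]) (use fb bdM in simp)
    moreover have "(\<Sum>i<n. v i ^ 2 * alpha i ^ (2 * h)) =
        (\<Sum>j\<in>{s..s + int r}. icoeff f j * complete_hom n alpha (nat (j - s)))"
      by (rule K2[OF inj rep _ s']) (use fb bds in simp)
    ultimately show "(\<forall>m\<le>M. (\<Sum>i<n. v i ^ 2 * alpha i ^ m) = 0) \<and> (\<Sum>i<n. v i ^ 2 * alpha i ^ (2 * h)) = 0"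
      using sc by simp
  qed
qed

end
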